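(* Let $k\ge2$, let $R\subset\mathbb{N}^k$ be a simple region, and let $n$ be such that $S_n^{\mathbb{N}}$ contains both accessible points (points of $R_n$) and boundary points (points of $B_n$). Then for every nonempty collection $C_n\subset B_n$ there exist a point $\bar y\in C_n$ and a $(k-2)$-dimensional affine subspace $\pi_{\bar y}$ of the hyperplane $\{x\in\mathbb{R}^k: x_1+\cdots+x_k=n\}$ such that: (1) $\bar y\in\pi_{\bar y}$; (2) $\pi_{\bar y}$ is given by the two equations $L(x)=m_1x_1+\cdots+m_kx_k=b$ and $x_1+\cdots+x_k=n$, where $b\in\mathbb{N}$ and all $m_i\in\mathbb{N}$, with at least one $m_i$ equal to $0$ and at least one $m_i$ nonzero; (3) $L(x)\ge b+1$ for every $x\in R_n$; (4) $L(y)\ge b+1$ for every $y\in C_n$ with $y\neq\bar y$.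
   Context: For $n\in\mathbb{N}$, $S_n\subset\mathbb{R}^k$ is the set of points with nonnegative coordinates summing to $n$, and $S_n^{\mathbb{N}}=S_n\cap\mathbb{N}^k$. For a region $R\subset\mathbb{N}^k$, its boundary $B$ is the set of points not in $R$ that can be reached in one step (by adding a standard unit vector $e_i$) from a point of $R$. Set $R_n=R\cap S_n^{\mathbb{N}}$ (accessible points of order $n$), $B_n=B\cap S_n^{\mathbb{N}}$ (boundary points of order $n$); points of $S_n^{\mathbb{N}}\setminus R_n$ are inaccessible. $R$ is simple if for every $n$ the convex hull of $R_n$ in $\mathbb{R}^k$ contains no inaccessible point of order $n$. *)

theory Defs
  imports "HOL-Analysis.Analysis"
begin

text \<open>Lattice points of \<nat>^k are functions 'n \<Rightarrow> nat over a finite index type 'n with CARD('n) = k.\<close>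

definition vec_of :: "('n::finite \<Rightarrow> nat) \<Rightarrow> real ^ 'n" where
  "vec_of x = (\<chi> i. real (x i))"

definition order_of :: "('n::finite \<Rightarrow> nat) \<Rightarrow> nat" where
  "order_of x = (\<Sum>i\<in>UNIV. x i)"

definition step :: "('n \<Rightarrow> nat) \<Rightarrow> 'n \<Rightarrow> ('n \<Rightarrow> nat)" where
  "step x i = x(i := Suc (x i))"

definition boundary :: "('n::finite \<Rightarrow> nat) set \<Rightarrow> ('n \<Rightarrow> nat) set" where
  "boundary R = {y. y \<notin> R \<and> (\<exists>x\<in>R. \<exists>i. y = step x i)}"

definition layer :: "('n::finite \<Rightarrow> nat) set \<Rightarrow> nat \<Rightarrow> ('n \<Rightarrow> nat) set" where
  "layer A n = {x \<in> A. order_of x = n}"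

definition simple_region :: "('n::finite \<Rightarrow> nat) set \<Rightarrow> bool" where
  "simple_region R \<longleftrightarrow>
     (\<forall>n. \<forall>y. order_of y = n \<and> y \<notin> R \<longrightarrow> vec_of y \<notin> convex hull (vec_of ` layer R n))"

end

theory Submission imports Defs begin


lemma extreme_in_Q:
  fixes P Q :: "'a::euclidean_space set"
  assumes "finite P" "finite Q" "Q \<noteq> {}" "\<And>q. q \<in> Q \<Longrightarrow> q \<notin> convex hull P"
  shows "\<exists>z\<in>Q. z \<notin> convex hull ((P \<union> Q) - {z})"
proof -
  let ?S = "P \<union> Q"
  let ?E = "{x. x extreme_point_of (convex hull ?S)}"
  have fS: "finite ?S" using assms by auto
  have KM: "convex hull ?S = convex hull ?E" using Krein_Milman_polytope[OF fS] .
  have "\<not> ?E \<subseteq> P"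
  proof
    assume "?E \<subseteq> P"
    then have "convex hull ?S \<subseteq> convex hull P" using KM hull_mono[of ?E P convex] by simp
    moreover obtain q where "q \<in> Q" using assms(3) by auto
    moreover have "q \<in> convex hull ?S" using \<open>q \<in> Q\<close> hull_subset by fastforce
    ultimately show False using assms(4) by blast
  qed
  then obtain z where ze: "z extreme_point_of (convex hull ?S)" and "z \<notin> P" by auto
  have "z \<in> ?S" using extreme_point_of_convex_hull[OF ze] .
  with \<open>z \<notin> P\<close> have zQ: "z \<in> Q" by auto
  have cv: "convex (convex hull ?S - {z})" using ze extreme_point_of_stillconvex convex_convex_hull by blast
  have "?S - {z} \<subseteq> convex hull ?S - {z}" using hull_subset by fastforce
  then have "convex hull (?S - {z}) \<subseteq> convex hull ?S - {z}" using cv by (simp add: hull_minimal)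
  then show ?thesis using zQ by blast
qed

lemma int_sep:
  fixes y :: "'n::finite \<Rightarrow> nat" and T :: "('n \<Rightarrow> nat) set"
  assumes "finite T" "vec_of y \<notin> convex hull (vec_of ` T)"
  shows "\<exists>c :: 'n \<Rightarrow> int. \<forall>x\<in>T. (\<Sum>i\<in>UNIV. c i * int (y i)) < (\<Sum>i\<in>UNIV. c i * int (x i))"
proof -
  have "closed (convex hull (vec_of ` T))"
    using assms(1) by (simp add: compact_imp_closed finite_imp_compact_convex_hull)
  then obtain a \<beta> where ab: "inner a (vec_of y) < \<beta>" "\<forall>p\<in>convex hull (vec_of ` T). \<beta> < inner a p"
    using separating_hyperplane_closed_point[OF convex_convex_hull _ assms(2)] by blast
  define \<epsilon> where "\<epsilon> = \<beta> - inner a (vec_of y)"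
  have ep: "\<epsilon> > 0" using ab by (simp add: \<epsilon>_def)
  define d where "d x i = real (x i) - real (y i)" for x i
  have inn: "inner a (vec_of x) - inner a (vec_of y) = (\<Sum>i\<in>UNIV. a $ i * d x i)" for x
    by (simp add: inner_vec_def vec_of_def d_def sum_subtractf[symmetric] algebra_simps)
  have gap: "(\<Sum>i\<in>UNIV. a $ i * d x i) > \<epsilon>" if "x \<in> T" for x
  proof -
    have "vec_of x \<in> convex hull (vec_of ` T)" using that hull_subset by fastforce
    then have "\<beta> < inner a (vec_of x)" using ab by blast
    then show ?thesis using inn[of x] by (simp add: \<epsilon>_def)
  qed
  define K where "K = 1 + (\<Sum>x\<in>T. \<Sum>i\<in>UNIV. \<bar>d x i\<bar>)"
  have Kx: "(\<Sum>i\<in>UNIV. \<bar>d x i\<bar>) < K" if "x \<in> T" for x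
  proof -
    have "(\<Sum>i\<in>UNIV. \<bar>d x i\<bar>) \<le> (\<Sum>x\<in>T. \<Sum>i\<in>UNIV. \<bar>d x i\<bar>)"
      by (rule member_le_sum[OF that _ assms(1)]) (simp add: sum_nonneg)
    then show ?thesis by (simp add: K_def)
  qed
  obtain N :: nat where N: "K / \<epsilon> < real N" using reals_Archimedean2 by blast
  have NK: "K < real N * \<epsilon>" using N ep by (simp add: field_simps)
  define c where "c i = \<lfloor>real N * a $ i\<rfloor>" for i
  have "(\<Sum>i\<in>UNIV. c i * int (y i)) < (\<Sum>i\<in>UNIV. c i * int (x i))" if "x \<in> T" for x
  proof -
    have e1: "real_of_int (c i) * d x i \<ge> real N * a $ i * d x i - \<bar>d x i\<bar>" for i
    proof -
      have f: "real N * a $ i - 1 < real_of_int (c i)" "real_of_int (c i) \<le> real N * a $ i"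
        unfolding c_def by linarith+
      show ?thesis
      proof (cases "d x i \<ge> 0")
        case True
        have "(real N * a $ i - 1) * d x i \<le> real_of_int (c i) * d x i"
          using f True by (intro mult_right_mono) auto
        then show ?thesis using True by (simp add: algebra_simps)
      next
        case False
        have "real N * a $ i * d x i \<le> real_of_int (c i) * d x i"
          using f False by (intro mult_right_mono_neg) auto
        then show ?thesis using False by linarith
      qed
    qed
    have "(\<Sum>i\<in>UNIV. real N * a $ i * d x i - \<bar>d x i\<bar>) \<le> (\<Sum>i\<in>UNIV. real_of_int (c i) * d x i)"
      by (rule sum_mono) (rule e1)
    moreover have "(\<Sum>i\<in>UNIV. real N * a $ i * d x i - \<bar>d x i\<bar>)
        = real N * (\<Sum>i\<in>UNIV. a $ i * d x i) - (\<Sum>i\<in>UNIV. \<bar>d x i\<bar>)"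
      by (simp add: sum_subtractf sum_distrib_left mult.assoc)
    moreover have "real N * (\<Sum>i\<in>UNIV. a $ i * d x i) \<ge> real N * \<epsilon>"
      using gap[OF that] by (intro mult_left_mono) auto
    ultimately have "0 < (\<Sum>i\<in>UNIV. real_of_int (c i) * d x i)"
      using Kx[OF that] NK by linarith
    also have "\<dots> = real_of_int ((\<Sum>i\<in>UNIV. c i * int (x i)) - (\<Sum>i\<in>UNIV. c i * int (y i)))"
      by (simp add: d_def sum_subtractf[symmetric] algebra_simps)
    finally show ?thesis by linarith
  qed
  then show ?thesis by blast
qed



lemma affdim2:
  fixes m :: "'n::finite \<Rightarrow> nat" and z :: "real ^ 'n" and b nn :: real
  assumes m0: "m i0 = 0" and m1: "m i1 \<noteq> 0"
    and zin: "(\<Sum>i\<in>UNIV. real (m i) * z $ i) = b" "(\<Sum>i\<in>UNIV. z $ i) = nn"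
  shows "aff_dim {x. (\<Sum>i\<in>UNIV. real (m i) * x $ i) = b \<and> (\<Sum>i\<in>UNIV. x $ i) = nn} = int CARD('n) - 2"
proof -
  define mv :: "real ^ 'n" where "mv = (\<chi> i. real (m i))"
  define ov :: "real ^ 'n" where "ov = (\<chi> i. 1)"
  have im: "mv \<bullet> x = (\<Sum>i\<in>UNIV. real (m i) * x $ i)" for x by (simp add: mv_def inner_vec_def)
  have io: "ov \<bullet> x = (\<Sum>i\<in>UNIV. x $ i)" for x by (simp add: ov_def inner_vec_def)
  define V where "V = {x. mv \<bullet> x = 0 \<and> ov \<bullet> x = 0}"
  have eq: "{x. (\<Sum>i\<in>UNIV. real (m i) * x $ i) = b \<and> (\<Sum>i\<in>UNIV. x $ i) = nn} = (+) z ` V"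
  proof (rule set_eqI, rule iffI)
    fix x assume "x \<in> {x. (\<Sum>i\<in>UNIV. real (m i) * x $ i) = b \<and> (\<Sum>i\<in>UNIV. x $ i) = nn}"
    then have "x - z \<in> V" using zin by (simp add: V_def im[symmetric] io[symmetric] inner_diff_right)
    then show "x \<in> (+) z ` V" by (rule rev_image_eqI) simp
  next
    fix x assume "x \<in> (+) z ` V"
    then obtain v where "v \<in> V" "x = z + v" by auto
    then show "x \<in> {x. (\<Sum>i\<in>UNIV. real (m i) * x $ i) = b \<and> (\<Sum>i\<in>UNIV. x $ i) = nn}"
      using zin by (simp add: V_def im[symmetric] io[symmetric] inner_add_right)
  qed
  have V2: "V = {y \<in> UNIV. \<forall>x \<in> span {mv, ov}. orthogonal x y}"
  proof (rule set_eqI, rule iffI)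
    fix y assume "y \<in> V"
    then have "orthogonal y x" if "x \<in> {mv, ov}" for x
      using that by (auto simp: V_def orthogonal_def inner_commute)
    then have "orthogonal y x" if "x \<in> span {mv, ov}" for x
      using orthogonal_to_span[OF that] by blast
    then show "y \<in> {y \<in> UNIV. \<forall>x \<in> span {mv, ov}. orthogonal x y}"
      by (auto simp: orthogonal_commute)
  next
    fix y assume "y \<in> {y \<in> UNIV. \<forall>x \<in> span {mv, ov}. orthogonal x y}"
    then show "y \<in> V" by (auto simp: V_def orthogonal_def span_base)
  qed
  have ne: "mv \<noteq> ov"
  proof
    assume "mv = ov" then have "mv $ i0 = ov $ i0" by simp
    then show False using m0 by (simp add: mv_def ov_def)
  qed
  have ov0: "ov \<noteq> 0"
  proof
    assume "ov = 0" then have "ov $ i0 = 0" by simp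
    then show False by (simp add: ov_def)
  qed
  have nsp: "mv \<notin> span {ov}"
  proof
    assume "mv \<in> span {ov}"
    then obtain t where t: "mv = t *\<^sub>R ov" by (auto simp: span_singleton)
    have "mv $ i0 = t" "mv $ i1 = t" using t by (auto simp: ov_def)
    then show False using m0 m1 by (simp add: mv_def)
  qed
  have ind: "independent {mv, ov}"
    using ne ov0 nsp by (simp add: independent_insert)
  have d2: "dim (span {mv, ov}) = 2"
    using dim_span_eq_card_independent[OF ind] ne by simp
  have "dim V + dim (span {mv, ov}) = dim (UNIV :: (real^'n) set)"
    unfolding V2 by (rule dim_subspace_orthogonal_to_vectors) auto
  then have dV: "dim V = CARD('n) - 2" using d2 by simp
  have "subspace V" unfolding V2 by (auto simp: subspace_def orthogonal_clauses)
  then have "aff_dim V = int (dim V)" by (rule aff_dim_subspace)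
  moreover have "CARD('n) \<ge> 2"
  proof -
    have "dim (span {mv, ov}) \<le> dim (UNIV :: (real^'n) set)" by (rule dim_subset) simp
    then show ?thesis using d2 by simp
  qed
  ultimately show ?thesis unfolding eq aff_dim_translation_eq using dV by (simp add: of_nat_diff)
qed


lemma fin_layer: "finite (layer (A :: ('n::finite \<Rightarrow> nat) set) n)"
proof -
  have "layer A n \<subseteq> Pi\<^sub>E UNIV (\<lambda>_. {..n})"
  proof
    fix x assume "x \<in> layer A n"
    then have "order_of x = n" by (simp add: layer_def)
    then have "x i \<le> n" for i unfolding order_of_def
      using member_le_sum[of i UNIV x] by auto
    then show "x \<in> Pi\<^sub>E UNIV (\<lambda>_. {..n})" by (simp add: PiE_UNIV_domain)
  qed
  moreover have "finite (Pi\<^sub>E (UNIV :: 'n set) (\<lambda>_. {..n}))" by (rule finite_PiE) auto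
  ultimately show ?thesis by (rule finite_subset)
qed

lemma vec_of_inj: "inj vec_of"
proof (rule injI)
  fix x y :: "'n::finite \<Rightarrow> nat" assume "vec_of x = vec_of y"
  then have "vec_of x $ i = vec_of y $ i" for i by simp
  then show "x = y" by (auto simp: vec_of_def)
qed

lemma real_L: "(\<Sum>i\<in>UNIV. real (m i) * vec_of x $ i) = real (\<Sum>i\<in>UNIV. m i * x i)"
  by (simp add: vec_of_def)

theorem lemma1:
  fixes R :: "('n::finite \<Rightarrow> nat) set" and n :: nat and C :: "('n \<Rightarrow> nat) set"
  assumes "CARD('n) \<ge> 2"
    and "simple_region R"
    and "layer R n \<noteq> {}"
    and "layer (boundary R) n \<noteq> {}"
    and "C \<subseteq> layer (boundary R) n" and "C \<noteq> {}"
  shows "\<exists>ybar\<in>C. \<exists>m :: 'n \<Rightarrow> nat. \<exists>b :: nat. \<exists>\<pi> :: (real ^ 'n) set.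
           \<pi> = {x. (\<Sum>i\<in>UNIV. real (m i) * x $ i) = real b \<and> (\<Sum>i\<in>UNIV. x $ i) = real n}
         \<and> aff_dim \<pi> = int CARD('n) - 2
         \<and> \<pi> \<subseteq> {x. (\<Sum>i\<in>UNIV. x $ i) = real n}
         \<and> vec_of ybar \<in> \<pi>
         \<and> (\<exists>i. m i = 0) \<and> (\<exists>i. m i \<noteq> 0)
         \<and> (\<forall>x\<in>layer R n. (\<Sum>i\<in>UNIV. real (m i) * vec_of x $ i) \<ge> real b + 1)
         \<and> (\<forall>y\<in>C. y \<noteq> ybar \<longrightarrow> (\<Sum>i\<in>UNIV. real (m i) * vec_of y $ i) \<ge> real b + 1)"
proof -
  let ?Rn = "layer R n"
  have hC: "q \<notin> R \<and> order_of q = n" if "q \<in> C" for q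
    using that assms(5) by (auto simp: layer_def boundary_def)
  have fR: "finite ?Rn" by (rule fin_layer)
  have fC: "finite C" using assms(5) fin_layer finite_subset by blast
  have ncv: "vec_of q \<notin> convex hull (vec_of ` ?Rn)" if "q \<in> C" for q
    using assms(2) hC[OF that] unfolding simple_region_def by blast
  have "\<exists>z\<in>vec_of ` C. z \<notin> convex hull ((vec_of ` ?Rn \<union> vec_of ` C) - {z})"
    by (rule extreme_in_Q) (use fR fC assms(6) ncv in auto)
  then obtain ybar where yC: "ybar \<in> C"
    and yn: "vec_of ybar \<notin> convex hull ((vec_of ` ?Rn \<union> vec_of ` C) - {vec_of ybar})" by blast
  define T where "T = (?Rn \<union> C) - {ybar}"
  have "vec_of ` T = (vec_of ` ?Rn \<union> vec_of ` C) - {vec_of ybar}"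
    unfolding T_def using image_set_diff[OF vec_of_inj, of "?Rn \<union> C" "{ybar}"] by (simp add: image_Un)
  with yn have yn': "vec_of ybar \<notin> convex hull (vec_of ` T)" by simp
  have fT: "finite T" using fR fC by (simp add: T_def)
  obtain c :: "'n \<Rightarrow> int" where c: "\<forall>x\<in>T. (\<Sum>i\<in>UNIV. c i * int (ybar i)) < (\<Sum>i\<in>UNIV. c i * int (x i))"
    using int_sep[OF fT yn'] by blast
  define cmin where "cmin = Min (range c)"
  have cle: "cmin \<le> c i" for i unfolding cmin_def by simp
  obtain i0 where i0: "c i0 = cmin"
  proof -
    have "Min (range c) \<in> range c" by (rule Min_in) auto
    then obtain j where "Min (range c) = c j" by blast
    then show ?thesis using that[of j] unfolding cmin_def by simp
  qed
  define m where "m i = nat (c i - cmin)" for i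
  have Lz: "int (\<Sum>i\<in>UNIV. m i * x i) = (\<Sum>i\<in>UNIV. c i * int (x i)) - cmin * int n"
    if "order_of x = n" for x
  proof -
    have "int (\<Sum>i\<in>UNIV. m i * x i) = (\<Sum>i\<in>UNIV. (c i - cmin) * int (x i))"
      using cle by (simp add: m_def of_nat_mult)
    also have "\<dots> = (\<Sum>i\<in>UNIV. c i * int (x i)) - cmin * (\<Sum>i\<in>UNIV. int (x i))"
      by (simp add: algebra_simps sum_subtractf sum_distrib_left)
    also have "(\<Sum>i\<in>UNIV. int (x i)) = int n" using that by (simp add: order_of_def flip: of_nat_sum)
    finally show ?thesis .
  qed
  define b where "b = (\<Sum>i\<in>UNIV. m i * ybar i)"
  have oy: "order_of ybar = n" using hC[OF yC] by simp
  have key: "real b + 1 \<le> (\<Sum>i\<in>UNIV. real (m i) * vec_of x $ i)" if "x \<in> T" for x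
  proof -
    have ox: "order_of x = n" using that hC by (auto simp: T_def layer_def)
    have "int b < int (\<Sum>i\<in>UNIV. m i * x i)"
      unfolding b_def using Lz[OF ox] Lz[OF oy] c that by auto
    then show ?thesis unfolding real_L by linarith
  qed
  obtain x0 where x0: "x0 \<in> ?Rn" using assms(3) by auto
  have x0T: "x0 \<in> T" using x0 hC[OF yC] by (auto simp: T_def layer_def)
  have m1: "\<exists>i. m i \<noteq> 0"
  proof (rule ccontr)
    assume "\<not> (\<exists>i. m i \<noteq> 0)"
    then have "m i = 0" for i by blast
    then have "(\<Sum>i\<in>UNIV. real (m i) * vec_of x0 $ i) = 0" by simp
    then show False using key[OF x0T] by simp
  qed
  then obtain i1 where i1: "m i1 \<noteq> 0" by blast
  have m0: "m i0 = 0" using i0 by (simp add: m_def)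
  have zin: "(\<Sum>i\<in>UNIV. real (m i) * vec_of ybar $ i) = real b"
    "(\<Sum>i\<in>UNIV. vec_of ybar $ i) = real n"
    subgoal by (simp add: real_L b_def)
    subgoal using oy by (simp add: vec_of_def order_of_def flip: of_nat_sum)
    done
  show ?thesis
  proof (intro bexI[OF _ yC] exI conjI)
    show "aff_dim {x. (\<Sum>i\<in>UNIV. real (m i) * x $ i) = real b \<and> (\<Sum>i\<in>UNIV. x $ i) = real n} = int CARD('n) - 2"
      by (rule affdim2[OF m0 i1 zin])
    show "\<forall>x\<in>?Rn. real b + 1 \<le> (\<Sum>i\<in>UNIV. real (m i) * vec_of x $ i)"
      using key hC[OF yC] by (auto simp: T_def layer_def)
    show "\<forall>y\<in>C. y \<noteq> ybar \<longrightarrow> real b + 1 \<le> (\<Sum>i\<in>UNIV. real (m i) * vec_of y $ i)"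
      using key by (auto simp: T_def)
  qed (use zin m0 i1 in auto)
qed

end
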